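(* Let $\mathbf L=(L_1,\ldots,L_K)$ and $\mathbf L'=(L'_1,\ldots,L'_{K'})$ be weakly decreasing sequences of positive integers with $\mathbf L\preccurlyeq\mathbf L'$. If $\mathbf L'\in\mathrm{TFF}(\alpha,N)$, then $\mathbf L\in\mathrm{TFF}(\alpha,N)$.
   Context: Fix a positive integer $N$. A weakly decreasing sequence of positive integers $(L_1,\ldots,L_K)$ belongs to $\mathrm{TFF}(\alpha,N)$ if there exist orthogonal projections $P_1,\ldots,P_K$ on $\mathbb{R}^N$ with $\operatorname{rank}P_i=L_i$ and $\sum_{i=1}^K P_i=\alpha\mathbf I$ (then necessarily $\alpha=\sum L_i/N$). For weakly decreasing sequences of nonnegative integers, $\mathbf L\preccurlyeq\mathbf L'$ (majorization) means $\sum_{i=1}^K L_i=\sum_{i=1}^{K'}L'_i$ and $\sum_{i=1}^k L_i\le\sum_{i=1}^k L'_i$ for all $k\le\min(K,K')$. *)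

theory Defs
  imports "HOL-Analysis.Analysis"
begin

definition orth_proj :: "real^'n^'n \<Rightarrow> bool" where
  "orth_proj P \<longleftrightarrow> transpose P = P \<and> P ** P = P"

text \<open>Membership of the sequence L = (L_1,...,L_K) (as a list) in TFF(alpha, N), N = CARD('n).\<close>
definition TFF :: "real \<Rightarrow> 'n::finite itself \<Rightarrow> nat list \<Rightarrow> bool" where
  "TFF \<alpha> _ L \<longleftrightarrow>
     (\<exists>P :: nat \<Rightarrow> real^'n^'n.
        (\<forall>i < length L. orth_proj (P i) \<and> rank (P i) = L ! i) \<and>
        (\<Sum>i<length L. P i) = \<alpha> *\<^sub>R mat 1)"

definition weakly_decr_pos :: "nat list \<Rightarrow> bool" where
  "weakly_decr_pos L \<longleftrightarrow> sorted_wrt (\<ge>) L \<and> (\<forall>x\<in>set L. 0 < x)"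

definition majorized :: "nat list \<Rightarrow> nat list \<Rightarrow> bool" where
  "majorized L L' \<longleftrightarrow> sum_list L = sum_list L' \<and>
     (\<forall>k \<le> min (length L) (length L'). sum_list (take k L) \<le> sum_list (take k L'))"

end

theory Submission imports Defs begin

definition outer :: "real^'n \<Rightarrow> real^'n^'n" where
  "outer e = (\<chi> i j. e$i * e$j)"

lemma outer_mult: "outer e *v x = (e \<bullet> x) *\<^sub>R e"
  by (simp add: outer_def vec_eq_iff matrix_vector_mult_def inner_vec_def sum_distrib_left mult_ac)

lemma orth_proj_iff:
  "orth_proj P \<longleftrightarrow> (\<forall>x. P *v (P *v x) = P *v x) \<and> (\<forall>x y. (P *v x) \<bullet> y = x \<bullet> (P *v y))"
proof -
  have 1: "P ** P = P \<longleftrightarrow> (\<forall>x. P *v (P *v x) = P *v x)"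
    by (simp add: matrix_eq matrix_vector_mul_assoc)
  have "(P *v x) \<bullet> y = x \<bullet> (transpose P *v y)" for x y
    by (metis dot_lmul_matrix vector_transpose_matrix transpose_transpose)
  hence 2: "transpose P = P \<longleftrightarrow> (\<forall>x y. (P *v x) \<bullet> y = x \<bullet> (P *v y))"
    by (metis matrix_eq vector_eq_rdot inner_commute)
  show ?thesis unfolding orth_proj_def using 1 2 by blast
qed

lemma range_subspace: "subspace (range (\<lambda>x. (A::real^'n^'n) *v x))"
  by (simp add: linear_subspace_image)

lemma proj_exists_vec:
  fixes P Q :: "real^'n^'n"
  assumes P: "orth_proj P" and Q: "orth_proj Q" and r: "rank Q < rank P"
  shows "\<exists>e. P *v e = e \<and> Q *v e = 0 \<and> e \<bullet> e = 1"
proof -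
  let ?V = "range (\<lambda>x. P *v x)"
  have "\<not> inj_on (\<lambda>x. Q *v x) ?V"
  proof
    assume inj: "inj_on (\<lambda>x. Q *v x) ?V"
    have "dim ((\<lambda>x. Q *v x) ` ?V) = dim ?V"
      by (rule dim_image_eq) (auto simp: span_eq_iff[THEN iffD2, OF range_subspace] inj)
    moreover have "dim ((\<lambda>x. Q *v x) ` ?V) \<le> dim (range (\<lambda>x. Q *v x))"
      by (rule dim_subset) auto
    ultimately show False using r by (simp add: rank_dim_range)
  qed
  then obtain x y where xy: "x \<in> ?V" "y \<in> ?V" "x \<noteq> y" "Q *v x = Q *v y"
    unfolding inj_on_def by blast
  define u where "u = x - y"
  have u0: "u \<noteq> 0" using xy by (simp add: u_def)
  have uV: "u \<in> ?V" using xy range_subspace unfolding u_def by (metis subspace_diff)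
  have Pu: "P *v u = u"
  proof -
    from uV obtain z where "u = P *v z" by auto
    thus ?thesis using P by (simp add: orth_proj_iff)
  qed
  have Qu: "Q *v u = 0" using xy by (simp add: u_def matrix_vector_mult_diff_distrib)
  define e where "e = (1 / norm u) *\<^sub>R u"
  have "e \<bullet> e = 1" using u0 by (simp add: e_def inner_commute dot_square_norm power2_eq_square)
  moreover have "P *v e = e" "Q *v e = 0" using Pu Qu by (simp_all add: e_def matrix_vector_mult_scaleR)
  ultimately show ?thesis by blast
qed

lemma range_proj_eq:
  assumes "orth_proj P" shows "v \<in> range (\<lambda>x. P *v x) \<longleftrightarrow> P *v v = v"
  using assms unfolding orth_proj_iff by (metis rangeE rangeI)

lemma transfer_step:
  fixes P Q :: "real^'n^'n"
  assumes P: "orth_proj P" and Q: "orth_proj Q" and r: "rank Q < rank P"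
  shows "\<exists>P' Q'. orth_proj P' \<and> orth_proj Q' \<and> rank P' = rank P - 1 \<and>
           rank Q' = rank Q + 1 \<and> P' + Q' = P + Q"
proof -
  obtain e where Pe: "P *v e = e" and Qe: "Q *v e = 0" and ee: "e \<bullet> e = 1"
    using proj_exists_vec[OF assms] by blast
  have Psym: "(P *v x) \<bullet> y = x \<bullet> (P *v y)" and Pid: "P *v (P *v x) = P *v x" for x y
    using P by (auto simp: orth_proj_iff)
  have Qsym: "(Q *v x) \<bullet> y = x \<bullet> (Q *v y)" and Qid: "Q *v (Q *v x) = Q *v x" for x y
    using Q by (auto simp: orth_proj_iff)
  have ePx: "e \<bullet> (P *v x) = e \<bullet> x" for x by (metis Pe Psym)
  have eQx: "e \<bullet> (Q *v x) = 0" for x by (metis Qe Qsym inner_zero_left)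
  define P' where "P' = P - outer e"
  define Q' where "Q' = Q + outer e"
  have P'x: "P' *v x = P *v x - (e \<bullet> x) *\<^sub>R e" for x
    by (simp add: P'_def matrix_vector_mult_diff_rdistrib outer_mult)
  have Q'x: "Q' *v x = Q *v x + (e \<bullet> x) *\<^sub>R e" for x
    by (simp add: Q'_def matrix_vector_mult_add_rdistrib outer_mult)
  have oP': "orth_proj P'"
    unfolding orth_proj_iff P'x
    by (simp add: matrix_vector_mult_diff_distrib matrix_vector_mult_scaleR Pid Pe ePx
          inner_diff_right ee Psym inner_diff_left inner_commute) (metis Psym inner_commute)
  have oQ': "orth_proj Q'"
    unfolding orth_proj_iff Q'x
    by (simp add: matrix_vector_right_distrib matrix_vector_mult_scaleR Qid Qe eQx
          inner_add_right ee Qsym inner_add_left inner_commute) (metis Qsym inner_commute)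
  let ?V = "range (\<lambda>x. P *v x)" and ?W = "range (\<lambda>x. P' *v x)"
  have eW: "e \<notin> ?W"
  proof
    assume "e \<in> ?W" then obtain z where z: "e = P' *v z" by auto
    have "e \<bullet> (P' *v z) = 0" using ePx ee by (simp add: P'x inner_diff_right)
    with ee z show False by simp
  qed
  have "span (insert e ?W) = ?V"
  proof (rule span_unique)
    show "insert e ?W \<subseteq> ?V"
    proof
      fix v assume "v \<in> insert e ?W"
      hence "P *v v = v" using Pe
        by (auto simp: P'x matrix_vector_mult_diff_distrib matrix_vector_mult_scaleR Pid)
      thus "v \<in> ?V" using range_proj_eq[OF P] by blast
    qed
    show "subspace ?V" by (rule range_subspace)
    fix T assume T: "insert e ?W \<subseteq> T" "subspace T"
    show "?V \<subseteq> T"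
    proof
      fix v assume "v \<in> ?V"
      hence v: "P *v v = v" using range_proj_eq[OF P] by blast
      have "v = P' *v v + (e \<bullet> v) *\<^sub>R e" using v by (simp add: P'x)
      moreover have "P' *v v \<in> T" "e \<in> T" using T by auto
      ultimately show "v \<in> T" using T(2) by (metis subspace_add subspace_mul)
    qed
  qed
  hence rP': "rank P' = rank P - 1"
    using eW dim_insert[of e ?W] span_eq_iff[THEN iffD2, OF range_subspace]
    by (metis dim_span rank_dim_range add_diff_cancel_right')
  let ?U = "range (\<lambda>x. Q *v x)" and ?X = "range (\<lambda>x. Q' *v x)"
  have eU: "e \<notin> ?U"
  proof
    assume "e \<in> ?U" then obtain z where "e = Q *v z" by auto
    hence "e \<bullet> e = 0" using eQx by simp
    with ee show False by simp
  qed
  have "span (insert e ?U) = ?X"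
  proof (rule span_unique)
    show "insert e ?U \<subseteq> ?X"
    proof
      fix v assume "v \<in> insert e ?U"
      then show "v \<in> ?X"
      proof
        assume "v = e" thus ?thesis using Qe ee by (auto simp: Q'x intro!: range_eqI[where x=e])
      next
        assume "v \<in> ?U" then obtain z where "v = Q *v z" by auto
        thus ?thesis using eQx Qid by (auto simp: Q'x intro!: range_eqI[where x="Q *v z"])
      qed
    qed
    show "subspace ?X" by (rule range_subspace)
    fix T assume T: "insert e ?U \<subseteq> T" "subspace T"
    show "?X \<subseteq> T"
    proof
      fix v assume "v \<in> ?X"
      then obtain z where "v = Q *v z + (e \<bullet> z) *\<^sub>R e" by (auto simp: Q'x)
      moreover have "Q *v z \<in> T" "e \<in> T" using T by auto
      ultimately show "v \<in> T" using T(2) by (metis subspace_add subspace_mul)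
    qed
  qed
  hence rQ': "rank Q' = rank Q + 1"
    using eU dim_insert[of e ?U] span_eq_iff[THEN iffD2, OF range_subspace]
    by (metis dim_span rank_dim_range)
  have "P' + Q' = P + Q" by (simp add: P'_def Q'_def)
  thus ?thesis using oP' oQ' rP' rQ' by blast
qed

definition TFFr :: "real \<Rightarrow> 'n::finite itself \<Rightarrow> nat \<Rightarrow> (nat \<Rightarrow> nat) \<Rightarrow> bool" where
  "TFFr \<alpha> T K r \<longleftrightarrow> (\<exists>P::nat \<Rightarrow> real^'n^'n.
     (\<forall>i<K. orth_proj (P i) \<and> rank (P i) = r i) \<and> (\<Sum>i<K. P i) = \<alpha> *\<^sub>R mat 1)"

lemma TFFr_transfer:
  assumes "TFFr \<alpha> (T::'n::finite itself) K r" "i < K" "j < K" "r j < r i"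
  shows "TFFr \<alpha> T K (r(i := r i - 1, j := r j + 1))"
proof -
  obtain P :: "nat \<Rightarrow> real^'n^'n" where P: "\<forall>i<K. orth_proj (P i) \<and> rank (P i) = r i"
    and S: "(\<Sum>i<K. P i) = \<alpha> *\<^sub>R mat 1"
    using assms(1) unfolding TFFr_def by blast
  have ij: "i \<noteq> j" using assms(4) by auto
  obtain A B where AB: "orth_proj A" "orth_proj B" "rank A = rank (P i) - 1"
    "rank B = rank (P j) + 1" "A + B = P i + P j"
    using transfer_step[of "P i" "P j"] P assms by auto
  define P' where "P' = P(i := A, j := B)"
  have gen: "(\<Sum>k<K. f k) = f i + f j + (\<Sum>k\<in>{..<K}-{i}-{j}. f k)" for f :: "nat \<Rightarrow> real^'n^'n"
  proof -
    have "(\<Sum>k<K. f k) = f i + (\<Sum>k\<in>{..<K}-{i}. f k)"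
      using assms(2) by (simp add: sum.remove)
    also have "(\<Sum>k\<in>{..<K}-{i}. f k) = f j + (\<Sum>k\<in>{..<K}-{i}-{j}. f k)"
      using assms(3) ij by (intro sum.remove) auto
    finally show ?thesis by (simp add: add.assoc)
  qed
  have "(\<Sum>k<K. P' k) = (\<Sum>k<K. P k)"
    unfolding gen[of P'] gen[of P]
    using AB(5) ij by (simp add: P'_def)
  hence c2: "(\<Sum>k<K. P' k) = \<alpha> *\<^sub>R mat 1" using S by simp
  have c1: "\<forall>k<K. orth_proj (P' k) \<and> rank (P' k) = (r(i := r i - 1, j := r j + 1)) k"
    using P AB ij by (auto simp: P'_def)
  show ?thesis unfolding TFFr_def by (intro exI[of _ P'] conjI c1 c2)
qed

lemma TFFr_cong: "\<forall>k<K. x k = y k \<Longrightarrow> TFFr \<alpha> T K x = TFFr \<alpha> T K y"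
  unfolding TFFr_def by auto

lemma comb:
  fixes y :: "nat \<Rightarrow> nat"
  assumes ydec: "\<And>a b. a \<le> b \<Longrightarrow> b < K \<Longrightarrow> y b \<le> y a"
  shows "sum x {..<K} = sum y {..<K} \<Longrightarrow> (\<forall>k\<le>K. sum y {..<k} \<le> sum x {..<k})
     \<Longrightarrow> TFFr \<alpha> T K x \<Longrightarrow> TFFr \<alpha> T K y"
proof (induction "\<Sum>k<K. (x k - y k) + (y k - x k)" arbitrary: x rule: less_induct)
  case less
  show ?case
  proof (cases "\<forall>k<K. x k = y k")
    case True
    then show ?thesis using less.prems(3) TFFr_cong by blast
  next
    case False
    have "\<exists>j<K. x j < y j"
    proof (rule ccontr)
      assume "\<not> ?thesis"
      hence le: "\<forall>j\<in>{..<K}. y j \<le> x j" by auto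
      from False le obtain k where "k \<in> {..<K}" "y k < x k" by force
      hence "sum y {..<K} < sum x {..<K}" using le by (intro sum_strict_mono_ex1) auto
      with less.prems(1) show False by simp
    qed
    define j where "j = (LEAST j. j < K \<and> x j < y j)"
    have j: "j < K" "x j < y j" using LeastI_ex[OF \<open>\<exists>j<K. x j < y j\<close>] unfolding j_def by auto
    have below: "y m \<le> x m" if "m < j" for m
      using not_less_Least[of m "\<lambda>j. j < K \<and> x j < y j"] that j(1) unfolding j_def[symmetric] by auto
    have "sum y {..<Suc j} \<le> sum x {..<Suc j}" using less.prems(2) j(1) Suc_leI by blast
    hence "sum y {..<j} < sum x {..<j}" using j(2) by simp
    have "\<exists>i. i < j \<and> y i < x i"
    proof (rule ccontr)
      assume "\<not> ?thesis"
      hence "sum x {..<j} \<le> sum y {..<j}" by (intro sum_mono) (meson lessThan_iff not_less)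
      with \<open>sum y {..<j} < sum x {..<j}\<close> show False by simp
    qed
    then obtain i where i: "i < j" "y i < x i" by blast
    have iK: "i < K" using i j by simp
    have ij: "i \<noteq> j" using i by simp
    define x' where "x' = x(i := x i - 1, j := x j + 1)"
    have pt: "x' m + (if m = i then 1 else 0) = x m + (if m = j then 1 else 0)" for m
      using i ij by (auto simp: x'_def)
    have key: "sum x' {..<k} + (if i < k then 1 else 0) = sum x {..<k} + (if j < k then 1 else 0)" for k
    proof -
      have "(\<Sum>m<k. x' m + (if m = i then 1 else 0)) = (\<Sum>m<k. x m + (if m = j then 1 else 0))"
        using pt by simp
      thus ?thesis by (simp add: sum.distrib sum.delta)
    qed
    have meas: "(\<Sum>k<K. (x' k - y k) + (y k - x' k)) < (\<Sum>k<K. (x k - y k) + (y k - x k))"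
    proof (rule sum_strict_mono_ex1)
      show "finite {..<K}" by simp
      show "\<forall>m\<in>{..<K}. x' m - y m + (y m - x' m) \<le> x m - y m + (y m - x m)"
        using i j ij by (auto simp: x'_def)
      show "\<exists>m\<in>{..<K}. x' m - y m + (y m - x' m) < x m - y m + (y m - x m)"
        using i j ij iK by (auto simp: x'_def intro!: bexI[of _ i])
    qed
    show ?thesis
    proof (rule less.hyps[OF meas])
      show "sum x' {..<K} = sum y {..<K}" using key[of K] iK j(1) less.prems(1) by simp
      show "\<forall>k\<le>K. sum y {..<k} \<le> sum x' {..<k}"
      proof (intro allI impI)
        fix k assume kK: "k \<le> K"
        show "sum y {..<k} \<le> sum x' {..<k}"
        proof (cases "i < k \<and> k \<le> j")
          case True
          have "(\<Sum>m<k. y m + (if m = i then 1 else 0)) \<le> (\<Sum>m<k. x m)"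
            using True i below by (intro sum_mono) auto
          hence "sum y {..<k} + 1 \<le> sum x {..<k}" using True by (simp add: sum.distrib sum.delta)
          thus ?thesis using key[of k] True by simp
        next
          case False
          have "sum x' {..<k} = sum x {..<k}" using key[of k] False i by (cases "i < k") auto
          thus ?thesis using less.prems(2) kK by simp
        qed
      qed
      have "x j < x i" using i j ydec[of i j] by linarith
      show "TFFr \<alpha> T K x'"
        unfolding x'_def by (rule TFFr_transfer[OF less.prems(3) iK j(1) \<open>x j < x i\<close>])
    qed
  qed
qed

lemma orth_proj_0: "orth_proj (0::real^'n^'n)"
  by (simp add: orth_proj_def transpose_def vec_eq_iff)

lemma sum_take: "k \<le> length xs \<Longrightarrow> sum_list (take k (xs::nat list)) = (\<Sum>i<k. xs ! i)"
  by (simp add: sum_list_sum_nth atLeast0LessThan min_def)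

theorem theorem2p3:
  fixes L L' :: "nat list" and \<alpha> :: real
  assumes "weakly_decr_pos L" and "weakly_decr_pos L'"
    and "majorized L L'"
    and "TFF \<alpha> TYPE('n::finite) L'"
  shows "TFF \<alpha> TYPE('n) L"
proof -
  define K where "K = length L"
  define K' where "K' = length L'"
  have sumeq: "sum_list L = sum_list L'" and pre: "\<And>k. k \<le> min K K' \<Longrightarrow> sum_list (take k L) \<le> sum_list (take k L')"
    using assms(3) unfolding majorized_def K_def K'_def by auto
  have posL': "\<forall>v\<in>set L'. 0 < v" using assms(2) unfolding weakly_decr_pos_def by auto
  have KK: "K' \<le> K"
  proof (rule ccontr)
    assume "\<not> K' \<le> K"
    hence KK: "K < K'" by simp
    have "sum_list L = sum_list (take K L)" by (simp add: K_def)
    also have "\<dots> \<le> sum_list (take K L')" using pre[of K] KK by simp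
    also have "\<dots> < sum_list L'"
    proof -
      have "drop K L' ! 0 \<in> set (drop K L')" using KK K'_def by (intro nth_mem) simp
      hence "L' ! K \<in> set (drop K L')" using KK K'_def by (simp add: nth_drop)
      moreover have "L' ! K > 0" using posL' KK K'_def by simp
      ultimately have "0 < sum_list (drop K L')" using member_le_sum_list[of "L' ! K" "drop K L'"] by simp
      thus ?thesis using sum_list_append[of "take K L'" "drop K L'"] by simp
    qed
    finally show False using sumeq by simp
  qed
  define x where "x k = (if k < K' then L' ! k else 0)" for k
  define y where "y k = L ! k" for k
  have "TFFr \<alpha> TYPE('n) K x"
  proof -
    obtain P :: "nat \<Rightarrow> real^'n^'n" where P: "\<forall>i<K'. orth_proj (P i) \<and> rank (P i) = L' ! i"
      and S: "(\<Sum>i<K'. P i) = \<alpha> *\<^sub>R mat 1"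
      using assms(4) unfolding TFF_def K'_def by blast
    define P2 where "P2 k = (if k < K' then P k else 0)" for k
    have "(\<Sum>k<K. P2 k) = (\<Sum>k<K'. P2 k)"
      using KK by (intro sum.mono_neutral_right) (auto simp: P2_def)
    also have "\<dots> = (\<Sum>k<K'. P k)" by (simp add: P2_def)
    finally have c2: "(\<Sum>k<K. P2 k) = \<alpha> *\<^sub>R mat 1" using S by simp
    have c1: "\<forall>i<K. orth_proj (P2 i) \<and> rank (P2 i) = x i"
      using P by (auto simp: P2_def x_def orth_proj_0)
    show ?thesis unfolding TFFr_def by (intro exI[of _ P2] conjI c1 c2)
  qed
  moreover have ydec: "y b \<le> y a" if "a \<le> b" "b < K" for a b
  proof (cases "a = b")
    case False
    hence "a < b" using that by simp
    thus ?thesis using assms(1) that sorted_wrt_nth_less[of "(\<ge>)" L a b]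
      unfolding weakly_decr_pos_def y_def K_def by auto
  qed simp
  moreover have xK: "sum x {..<K} = sum_list L'"
  proof -
    have "sum x {..<K} = sum x {..<K'}"
      using KK by (intro sum.mono_neutral_right) (auto simp: x_def)
    also have "\<dots> = sum_list L'" using sum_take[of K' L'] by (simp add: x_def K'_def)
    finally show ?thesis .
  qed
  moreover have "sum y {..<K} = sum_list L" using sum_take[of K L] by (simp add: y_def K_def)
  moreover have "\<forall>k\<le>K. sum y {..<k} \<le> sum x {..<k}"
  proof (intro allI impI)
    fix k assume kK: "k \<le> K"
    have yk: "sum y {..<k} = sum_list (take k L)" using sum_take[of k L] kK by (simp add: y_def K_def)
    show "sum y {..<k} \<le> sum x {..<k}"
    proof (cases "k \<le> K'")
      case True
      have "sum x {..<k} = sum_list (take k L')" using sum_take[of k L'] True by (simp add: x_def K'_def)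
      thus ?thesis using yk pre[of k] True kK by simp
    next
      case False
      have "sum x {..<k} = sum x {..<K'}"
        using False by (intro sum.mono_neutral_right) (auto simp: x_def)
      also have "\<dots> = sum_list L'" using sum_take[of K' L'] by (simp add: x_def K'_def)
      finally have "sum x {..<k} = sum_list L" using sumeq by simp
      moreover have "sum_list (take k L) \<le> sum_list L"
        using sum_list_append[of "take k L" "drop k L"] by simp
      ultimately show ?thesis using yk by simp
    qed
  qed
  ultimately have "TFFr \<alpha> TYPE('n) K y" using comb[of K y x \<alpha> "TYPE('n)"] sumeq by simp
  thus ?thesis unfolding TFFr_def TFF_def y_def K_def .
qed

end
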